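(* Consider the system $x(k+1)=Ax(k)+Bu(k)+w(k)$ in closed loop with the control scheme described in the context (Algorithm ATCS with parameter $\lambda$), and suppose that the problem $\mathbb{P}_0(x(0),\{0\})$ is feasible. Then: (i) for every iteration $k=1,2,\ldots$ reached by the algorithm and for any disturbance realization with $w(k)\in\mathcal{W}$ for all $k$, the problem $\mathbb{P}_k(x(k),\mathcal{Z}_{f,k})$, with the terminal set $\mathcal{Z}_{f,k}$ defined according to the algorithm (and with the additional constraint $N_k\le N^*_{k-1}-1$ whenever the second branch of the algorithm is taken), is feasible; (ii) if the weights $\gamma_v,\gamma_z\ge 0$ are selected such that $$\bar\lambda = 1-\sup_{w\in\mathcal{W}}\Big\{\gamma_z\sum_{j=0}^{\infty}\|A_K^j w\|+\gamma_v\sum_{j=0}^{\infty}\|K A_K^j w\|\Big\}>0$$ and $\lambda=\bar\lambda$ is used in the algorithm, then the optimal cost decreases by at least $\bar\lambda$ at each step, i.e. $J^*_{k+1}\le J^*_k-\bar\lambda$ for all $k$.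
   Context: System: $x(k+1)=Ax(k)+Bu(k)+w(k)$ with $x(k)\in\mathbb{R}^n$, $u(k)\in\mathbb{R}^m$, disturbance $w(k)\in\mathcal{W}$; state/input constraints $x(k)\in\mathcal{X}(k)$, $u(k)\in\mathcal{U}(k)$, where $\mathcal{X}(k),\mathcal{U}(k),\mathcal{W}$ are convex sets. A reference trajectory $r(k)\in\mathbb{R}^n$ is given. $K\in\mathbb{R}^{m\times n}$ is such that $A_K=A+BK$ is Schur. $\mathcal{A}\oplus\mathcal{B}=\{a+b: a\in\mathcal{A},b\in\mathcal{B}\}$ (Minkowski sum), $\mathcal{A}\ominus\mathcal{B}=\{a: \{a\}\oplus\mathcal{B}\subseteq\mathcal{A}\}$ (Pontryagin difference). Define $\mathcal{S}(0)=\{0\}$ and $\mathcal{S}(j)=\bigoplus_{i=0}^{j-1}A_K^i\mathcal{W}$ for $j\ge1$; tightened sets $\mathcal{Z}_k(j)=\mathcal{X}(k+j)\ominus\mathcal{S}(j)$, $\mathcal{V}_k(j)=\mathcal{U}(k+j)\ominus K\mathcal{S}(j)$. Fix weights $\gamma_z,\gamma_v\ge0$ and a vector norm $\|\cdot\|$ (possibly weighted). Problem $\mathbb{P}_k(x(k),\mathcal{Z}_f)$, for a convex set $\mathcal{Z}_f$: minimize over $N_k\in\{1,2,\ldots\}$, $v_k(0),\ldots,v_k(N_k-1)$, $z_k(0),\ldots,z_k(N_k)$ the cost $J_k=N_k+\gamma_z\sum_{j=0}^{N_k}\|z_k(j)-r(k+j)\|+\gamma_v\sum_{j=0}^{N_k-1}\|v_k(j)\|$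 subject to $z_k(0)=x(k)$, $z_k(j+1)=Az_k(j)+Bv_k(j)$, $z_k(j)\in\mathcal{Z}_k(j)$ for $j=1,\ldots,N_k-1$, $v_k(j)\in\mathcal{V}_k(j)$ for $j=0,\ldots,N_k-1$, and $z_k(N_k)\in\{r(k+N_k)\}\oplus\mathcal{Z}_f$. Algorithm ATCS (parameter $\lambda$): at $k=0$ solve $\mathbb{P}_0(x(0),\{0\})$, obtaining $(J_0^*,N_0^*,v_0^*,z_0^* )$; set $\mathcal{Z}_{f,0}=\{0\}$, $\bar N=N_0^*$, apply $u(0)=v_0^*(0)$. Then, while $N^*_{k}>1$, increment $k$ and: solve $\mathbb{P}_k(x(k),\{0\})$ with optimal cost $\tilde J_k^*$ ($\tilde J_k^*=\infty$ if infeasible). If $\tilde J_k^*>J^*_{k-1}-\lambda$, set $\mathcal{Z}_{f,k}=\mathcal{Z}_{f,k-1}\oplus A_K^{N^*_{k-1}-1}\mathcal{W}$ and solve $\mathbb{P}_k(x(k),\mathcal{Z}_{f,k})$ with the additional constraint $N_k\le N^*_{k-1}-1$, letting its solution be $(J_k^*,N_k^*,v_k^*,z_k^* )$; otherwise let $(J_k^*,N_k^*,v_k^*,z_k^* )$ be the solution of $\mathbb{P}_k(x(k),\{0\})$, set $\mathcal{Z}_{f,k}=\{0\}$ and $\bar N=N_k^*$. Apply $u(k)=v_k^*(0)$, so $x(k+1)=Ax(k)+Bu(k)+w(k)$ with $w(k)\in\mathcal{W}$ arbitrary. Upon termination, return $\bar N$. *)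

theory Defs
  imports "HOL-Analysis.Analysis"
begin

definition msum :: "'a::ab_group_add set \<Rightarrow> 'a set \<Rightarrow> 'a set" where
  "msum P Q = {p + q | p q. p \<in> P \<and> q \<in> Q}"

definition pdiff :: "'a::ab_group_add set \<Rightarrow> 'a set \<Rightarrow> 'a set" where
  "pdiff P Q = {a. msum {a} Q \<subseteq> P}"

definition is_norm :: "('a::real_vector \<Rightarrow> real) \<Rightarrow> bool" where
  "is_norm f \<longleftrightarrow> (\<forall>x. 0 \<le> f x) \<and> (\<forall>x. f x = 0 \<longleftrightarrow> x = 0)
     \<and> (\<forall>c x. f (c *\<^sub>R x) = \<bar>c\<bar> * f x) \<and> (\<forall>x y. f (x + y) \<le> f x + f y)"

fun mpow :: "real^'n^'n \<Rightarrow> nat \<Rightarrow> real^'n^'n" where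
  "mpow M 0 = mat 1"
| "mpow M (Suc j) = M ** mpow M j"

definition is_schur :: "real^'n^'n \<Rightarrow> bool" where
  "is_schur M \<longleftrightarrow> (\<forall>(c::complex) (v::complex^'n).
      v \<noteq> 0 \<and> (\<chi> i. \<Sum>j\<in>UNIV. complex_of_real (M$i$j) * v$j) = (\<chi> i. c * v$i)
      \<longrightarrow> cmod c < 1)"

fun Sset :: "real^'n^'n \<Rightarrow> (real^'n) set \<Rightarrow> nat \<Rightarrow> (real^'n) set" where
  "Sset AK W 0 = {0}"
| "Sset AK W (Suc j) = msum (Sset AK W j) ((\<lambda>w. mpow AK j *v w) ` W)"

definition feas_sol ::
  "real^'n^'n \<Rightarrow> real^'m^'n \<Rightarrow> real^'n^'m \<Rightarrow> (nat \<Rightarrow> (real^'n) set) \<Rightarrow> (nat \<Rightarrow> (real^'m) set)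
   \<Rightarrow> (real^'n) set \<Rightarrow> (nat \<Rightarrow> real^'n) \<Rightarrow> nat \<Rightarrow> real^'n \<Rightarrow> (real^'n) set \<Rightarrow> nat option
   \<Rightarrow> nat \<Rightarrow> (nat \<Rightarrow> real^'m) \<Rightarrow> (nat \<Rightarrow> real^'n) \<Rightarrow> bool" where
  "feas_sol A B K X U W r k x Zf bnd N v z \<longleftrightarrow>
     1 \<le> N \<and> (case bnd of None \<Rightarrow> True | Some b \<Rightarrow> N \<le> b) \<and>
     z 0 = x \<and>
     (\<forall>j<N. z (Suc j) = A *v z j + B *v v j) \<and>
     (\<forall>j. 1 \<le> j \<and> j < N \<longrightarrow> z j \<in> pdiff (X (k + j)) (Sset (A + B ** K) W j)) \<and>
     (\<forall>j<N. v j \<in> pdiff (U (k + j)) ((\<lambda>s. K *v s) ` Sset (A + B ** K) W j)) \<and>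
     z N \<in> msum {r (k + N)} Zf"

definition cost ::
  "real \<Rightarrow> real \<Rightarrow> (real^'n \<Rightarrow> real) \<Rightarrow> (real^'m \<Rightarrow> real) \<Rightarrow> (nat \<Rightarrow> real^'n) \<Rightarrow> nat
   \<Rightarrow> nat \<Rightarrow> (nat \<Rightarrow> real^'m) \<Rightarrow> (nat \<Rightarrow> real^'n) \<Rightarrow> real" where
  "cost gz gv nz nv r k N v z =
     real N + gz * (\<Sum>j\<le>N. nz (z j - r (k + j))) + gv * (\<Sum>j<N. nv (v j))"

(* optimal value (+\<infinity> if infeasible) *)
definition optval where
  "optval A B K X U W r gz gv nz nv k x Zf bnd =
     Inf {ereal (cost gz gv nz nv r k N v z) | N v z. feas_sol A B K X U W r k x Zf bnd N v z}"

definition opt_sol where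
  "opt_sol A B K X U W r gz gv nz nv k x Zf bnd N v z \<longleftrightarrow>
     feas_sol A B K X U W r k x Zf bnd N v z \<and>
     ereal (cost gz gv nz nv r k N v z) = optval A B K X U W r gz gv nz nv k x Zf bnd"

(* iteration j \<ge> 1 of ATCS, executed correctly given the data of iteration j-1 *)
definition atcs_step where
  "atcs_step A B K X U W r gz gv nz nv lam x Ns vs zs Zf j \<longleftrightarrow>
     1 < Ns (j - 1) \<and>
     (if optval A B K X U W r gz gv nz nv j (x j) {0} None
           > ereal (cost gz gv nz nv r (j - 1) (Ns (j - 1)) (vs (j - 1)) (zs (j - 1)) - lam)
      then Zf j = msum (Zf (j - 1)) ((\<lambda>w. mpow (A + B ** K) (Ns (j - 1) - 1) *v w) ` W) \<and>
           opt_sol A B K X U W r gz gv nz nv j (x j) (Zf j) (Some (Ns (j - 1) - 1)) (Ns j) (vs j) (zs j)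
      else Zf j = {0} \<and>
           opt_sol A B K X U W r gz gv nz nv j (x j) {0} None (Ns j) (vs j) (zs j))"

(* closed loop run of ATCS: iterations 0..k executed, states x(0..k) generated by the plant *)
definition atcs_run where
  "atcs_run A B K X U W r gz gv nz nv lam x0 x w Ns vs zs Zf k \<longleftrightarrow>
     x 0 = x0 \<and>
     opt_sol A B K X U W r gz gv nz nv 0 (x 0) {0} None (Ns 0) (vs 0) (zs 0) \<and> Zf 0 = {0} \<and>
     (\<forall>j. 1 \<le> j \<and> j \<le> k \<longrightarrow> atcs_step A B K X U W r gz gv nz nv lam x Ns vs zs Zf j) \<and>
     (\<forall>j<k. w j \<in> W \<and> x (Suc j) = A *v x j + B *v vs j 0 + w j)"

end

theory Submission
  imports Defs "Jordan_Normal_Form.Spectral_Radius" begin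
no_notation Matrix.vec_index (infixl "$" 100)

lemma mpow_Suc': "mpow M (Suc k) = mpow M k ** M"
  by (induction k) (simp_all add: matrix_mul_assoc)

lemma schur_pow_bound:
  fixes M :: "real^'n^'n"
  assumes sch: "is_schur M"
  shows "\<exists>c \<rho>. 0 < \<rho> \<and> \<rho> < 1 \<and> (\<forall>k a b. \<bar>mpow M k $ a $ b\<bar> \<le> c * \<rho>^k)"
proof -
  define n where "n = CARD('n)"
  have n0: "n > 0" unfolding n_def by simp
  obtain g :: "nat \<Rightarrow> 'n" where g: "bij_betw g {..<n} UNIV"
    using bij_betw_from_nat_into_finite[of "UNIV :: 'n set"] unfolding n_def by auto
  define h where "h = inv_into {..<n} g"
  have hn: "h a < n" for a unfolding h_def using g
    by (metis bij_betw_def inv_into_into lessThan_iff UNIV_I)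
  have gh: "g (h a) = a" for a unfolding h_def using g
    by (meson bij_betw_inv_into_right UNIV_I)
  have hg: "i < n \<Longrightarrow> h (g i) = i" for i unfolding h_def using g
    by (meson bij_betw_inv_into_left lessThan_iff)
  have ginj: "i < n \<Longrightarrow> j < n \<Longrightarrow> g i = g j \<longleftrightarrow> i = j" for i j
    using hg by metis
  have sumg: "(\<Sum>b\<in>UNIV. F b) = (\<Sum>j<n. F (g j))" for F :: "'n \<Rightarrow> 'b::comm_monoid_add"
    using sum.reindex_bij_betw[OF g, of F] by simp
  define CM where "CM t = Matrix.mat n n (\<lambda>(i,j). complex_of_real (M $ g i $ g j) / t)" for t :: complex
  have CMc: "CM t \<in> carrier_mat n n" for t unfolding CM_def by simp
  have ev1: "cmod (c * t) < 1" if t0: "t \<noteq> 0" and ev: "eigenvalue (CM t) c" for c t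
  proof -
    from ev obtain v where v: "v \<in> carrier_vec n" "v \<noteq> 0\<^sub>v n" "CM t *\<^sub>v v = c \<cdot>\<^sub>v v"
      unfolding eigenvalue_def eigenvector_def CM_def by auto
    define u :: "complex^'n" where "u = (\<chi> a. vec_index v (h a))"
    have "u \<noteq> 0"
    proof
      assume u0: "u = 0"
      have "v = 0\<^sub>v n"
      proof (rule eq_vecI)
        fix i assume "i < dim_vec (0\<^sub>v n)"
        hence i: "i < n" by simp
        have "vec_index v i = u $ g i" unfolding u_def using hg[OF i] by simp
        thus "vec_index v i = vec_index (0\<^sub>v n) i" using u0 i by simp
      qed (use v in simp)
      with v show False by simp
    qed
    moreover have "(\<chi> i. \<Sum>j\<in>UNIV. complex_of_real (M$i$j) * u$j) = (\<chi> i. (c * t) * u$i)"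
    proof (subst Finite_Cartesian_Product.vec_eq_iff, rule allI)
      fix a
      have "vec_index (CM t *\<^sub>v v) (h a) = vec_index (c \<cdot>\<^sub>v v) (h a)" using v by simp
      hence "(\<Sum>j<n. complex_of_real (M $ a $ g j) / t * vec_index v j) = c * vec_index v (h a)"
        using hn[of a] v(1) unfolding CM_def
        by (simp add: gh atLeast0LessThan scalar_prod_def)
      hence "(\<Sum>j<n. complex_of_real (M $ a $ g j) * vec_index v j) = (c * t) * vec_index v (h a)"
        using t0 by (simp add: sum_divide_distrib[symmetric] field_simps)
      moreover have "(\<Sum>j\<in>UNIV. complex_of_real (M$a$j) * u$j) = (\<Sum>j<n. complex_of_real (M $ a $ g j) * vec_index v j)"
        unfolding sumg u_def by (intro sum.cong) (auto simp: hg)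
      ultimately show "(\<chi> i. \<Sum>j\<in>UNIV. complex_of_real (M$i$j) * u$j) $ a = (\<chi> i. (c * t) * u$i) $ a"
        by (simp add: u_def)
    qed
    ultimately show ?thesis using sch unfolding is_schur_def by blast
  qed
  define sr where "sr = spectral_radius (CM 1)"
  have "sr \<in> norm ` spectrum (CM 1)" unfolding sr_def by (rule spectral_radius_mem_max(1)[OF CMc n0])
  then obtain c1 where "eigenvalue (CM 1) c1" "sr = cmod c1" unfolding spectrum_def by auto
  with ev1[of 1 c1] have sr1: "sr < 1" by simp
  have sr0: "sr \<ge> 0" using \<open>sr = cmod c1\<close> by simp
  define \<rho> where "\<rho> = (1 + sr) / 2"
  have \<rho>: "0 < \<rho>" "\<rho> < 1" "sr < \<rho>" using sr1 sr0 unfolding \<rho>_def by auto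
  have "spectral_radius (CM (complex_of_real \<rho>)) \<in> norm ` spectrum (CM (complex_of_real \<rho>))"
    by (rule spectral_radius_mem_max(1)[OF CMc n0])
  then obtain c2 where c2: "eigenvalue (CM (complex_of_real \<rho>)) c2"
     "spectral_radius (CM (complex_of_real \<rho>)) = cmod c2" unfolding spectrum_def by auto
  then obtain v where v: "v \<in> carrier_vec n" "v \<noteq> 0\<^sub>v n" "CM (complex_of_real \<rho>) *\<^sub>v v = c2 \<cdot>\<^sub>v v"
    unfolding eigenvalue_def eigenvector_def CM_def by auto
  have "CM 1 *\<^sub>v v = (c2 * complex_of_real \<rho>) \<cdot>\<^sub>v v"
  proof (rule eq_vecI)
    fix i assume "i < dim_vec ((c2 * complex_of_real \<rho>) \<cdot>\<^sub>v v)"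
    hence i: "i < n" using v by simp
    have "vec_index (CM (complex_of_real \<rho>) *\<^sub>v v) i = vec_index (c2 \<cdot>\<^sub>v v) i" using v by simp
    hence "(\<Sum>j<n. complex_of_real (M $ g i $ g j) / complex_of_real \<rho> * vec_index v j) = c2 * vec_index v i"
      using i v(1) unfolding CM_def by (simp add: atLeast0LessThan scalar_prod_def)
    hence "(\<Sum>j<n. complex_of_real (M $ g i $ g j) * vec_index v j) = c2 * complex_of_real \<rho> * vec_index v i"
      using \<rho> by (simp add: sum_divide_distrib[symmetric] field_simps)
    thus "vec_index (CM 1 *\<^sub>v v) i = vec_index ((c2 * complex_of_real \<rho>) \<cdot>\<^sub>v v) i"
      using i v(1) unfolding CM_def by (simp add: atLeast0LessThan scalar_prod_def)
  qed (use v in \<open>simp add: CM_def\<close>)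
  hence "eigenvalue (CM 1) (c2 * complex_of_real \<rho>)"
    unfolding eigenvalue_def eigenvector_def using v by (auto simp: CM_def)
  hence "cmod (c2 * complex_of_real \<rho>) \<le> sr"
    unfolding sr_def by (intro spectral_radius_mem_max(2)[OF CMc n0]) (auto simp: spectrum_def)
  hence "cmod c2 * \<rho> \<le> sr" using \<rho> by (simp add: norm_mult)
  hence "cmod c2 * \<rho> < 1 * \<rho>" using \<rho> by linarith
  hence "cmod c2 < 1" using \<rho> mult_less_cancel_right_pos[of \<rho> "cmod c2" 1] by blast
  then obtain c0 where c0: "\<forall>k. norm_bound (CM (complex_of_real \<rho>) ^\<^sub>m k) c0"
    using spectral_radius_jnf_norm_bound_less_1_upper_triangular[OF CMc, of "complex_of_real \<rho>"] c2(2) by auto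
  have pw: "\<forall>i j. i < n \<longrightarrow> j < n \<longrightarrow> (CM (complex_of_real \<rho>) ^\<^sub>m k) $$ (i,j)
      = complex_of_real (mpow M k $ g i $ g j) / complex_of_real \<rho> ^ k" for k
  proof (induction k)
    case 0
    show ?case by (auto simp: ginj Finite_Cartesian_Product.mat_def CM_def)
  next
    case (Suc k)
    show ?case
    proof (intro allI impI)
      fix i j assume i: "i < n" and j: "j < n"
      have "(CM (complex_of_real \<rho>) ^\<^sub>m Suc k) $$ (i,j)
         = (\<Sum>l<n. (complex_of_real (mpow M k $ g i $ g l) / complex_of_real \<rho> ^ k)
               * (complex_of_real (M $ g l $ g j) / complex_of_real \<rho>))"
        using i j Suc.IH CMc
        by (simp add: atLeast0LessThan CM_def scalar_prod_def)
      also have "\<dots> = (\<Sum>l<n. complex_of_real (mpow M k $ g i $ g l * M $ g l $ g j)) / complex_of_real \<rho> ^ Suc k"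
        by (simp add: sum_divide_distrib field_simps)
      also have "\<dots> = complex_of_real (mpow M (Suc k) $ g i $ g j) / complex_of_real \<rho> ^ Suc k"
        unfolding mpow_Suc' matrix_matrix_mult_def sumg by simp
      finally show "(CM (complex_of_real \<rho>) ^\<^sub>m Suc k) $$ (i,j)
         = complex_of_real (mpow M (Suc k) $ g i $ g j) / complex_of_real \<rho> ^ Suc k" .
    qed
  qed
  have "\<bar>mpow M k $ a $ b\<bar> \<le> c0 * \<rho>^k" for k a b
  proof -
    have "norm ((CM (complex_of_real \<rho>) ^\<^sub>m k) $$ (h a, h b)) \<le> c0"
      using c0 hn CMc unfolding norm_bound_def by (metis carrier_matD pow_mat_dim_square)
    hence "norm (complex_of_real (mpow M k $ a $ b) / complex_of_real \<rho> ^ k) \<le> c0"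
      using pw hn gh by metis
    hence "\<bar>mpow M k $ a $ b\<bar> / \<rho> ^ k \<le> c0" using \<rho>
      by (simp add: norm_divide norm_power)
    thus ?thesis using \<rho> by (simp add: field_simps)
  qed
  thus ?thesis using \<rho> by blast
qed

lemma is_norm_zero: "is_norm f \<Longrightarrow> f 0 = 0"
  unfolding is_norm_def by blast

lemma is_norm_sum: assumes "is_norm f" shows "f (sum g S) \<le> (\<Sum>i\<in>S. f (g i))"
proof (cases "finite S")
  case True thus ?thesis
  proof (induction S rule: finite_induct)
    case empty thus ?case using is_norm_zero[OF assms] by simp
  next
    case (insert x F)
    have "f (sum g (insert x F)) = f (g x + sum g F)" using insert by simp
    also have "\<dots> \<le> f (g x) + f (sum g F)" using assms unfolding is_norm_def by blast
    also have "\<dots> \<le> f (g x) + (\<Sum>i\<in>F. f (g i))" using insert by simp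
    finally show ?case using insert by simp
  qed
next
  case False thus ?thesis using is_norm_zero[OF assms] by simp
qed

lemma is_norm_bound:
  fixes f :: "'a::euclidean_space \<Rightarrow> real"
  assumes f: "is_norm f" shows "\<exists>C\<ge>0. \<forall>y. f y \<le> C * norm y"
proof (intro exI[of _ "\<Sum>b\<in>Basis. f b"] conjI allI)
  show "0 \<le> (\<Sum>b\<in>Basis. f b)" using f unfolding is_norm_def by (simp add: sum_nonneg)
  fix y :: 'a
  have "f y = f (\<Sum>b\<in>Basis. (y \<bullet> b) *\<^sub>R b)" by (simp add: euclidean_representation)
  also have "\<dots> \<le> (\<Sum>b\<in>Basis. f ((y \<bullet> b) *\<^sub>R b))" by (rule is_norm_sum[OF f])
  also have "\<dots> = (\<Sum>b\<in>Basis. \<bar>y \<bullet> b\<bar> * f b)" using f unfolding is_norm_def by simp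
  also have "\<dots> \<le> (\<Sum>b\<in>Basis. norm y * f b)"
    by (intro sum_mono mult_right_mono) (use f Basis_le_norm in \<open>auto simp: is_norm_def\<close>)
  finally show "f y \<le> (\<Sum>b\<in>Basis. f b) * norm y" by (simp add: sum_distrib_left mult.commute)
qed

lemma schur_decay:
  fixes M :: "real^'n^'n"
  assumes "is_schur M"
  shows "\<exists>D \<rho>. 0 < \<rho> \<and> \<rho> < 1 \<and> (\<forall>k. norm (mpow M k *v w) \<le> D * \<rho>^k)"
proof -
  obtain c \<rho> where c: "0 < \<rho>" "\<rho> < 1" "\<And>k a b. \<bar>mpow M k $ a $ b\<bar> \<le> c * \<rho>^k"
    using schur_pow_bound[OF assms] by blast
  have "norm (mpow M k *v w) \<le> (real CARD('n) * (c * (\<Sum>b\<in>UNIV. \<bar>w $ b\<bar>))) * \<rho>^k" for k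
  proof -
    have "norm (mpow M k *v w) \<le> (\<Sum>a\<in>UNIV. \<bar>(mpow M k *v w) $ a\<bar>)" by (rule norm_le_l1_cart)
    also have "\<dots> \<le> (\<Sum>a\<in>(UNIV::'n set). c * \<rho>^k * (\<Sum>b\<in>UNIV. \<bar>w $ b\<bar>))"
    proof (intro sum_mono)
      fix a
      have "\<bar>(mpow M k *v w) $ a\<bar> = \<bar>\<Sum>b\<in>UNIV. mpow M k $ a $ b * w $ b\<bar>"
        by (simp add: matrix_vector_mult_def)
      also have "\<dots> \<le> (\<Sum>b\<in>UNIV. \<bar>mpow M k $ a $ b\<bar> * \<bar>w $ b\<bar>)"
        by (rule order_trans[OF sum_abs]) (simp add: abs_mult)
      also have "\<dots> \<le> (\<Sum>b\<in>UNIV. c * \<rho>^k * \<bar>w $ b\<bar>)"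
        by (intro sum_mono mult_right_mono c(3)) simp
      finally show "\<bar>(mpow M k *v w) $ a\<bar> \<le> c * \<rho>^k * (\<Sum>b\<in>UNIV. \<bar>w $ b\<bar>)"
        by (simp add: sum_distrib_left)
    qed
    finally show ?thesis by (simp add: algebra_simps)
  qed
  thus ?thesis using c by blast
qed

lemma schur_summable:
  fixes M :: "real^'n^'n"
  assumes "is_schur M" and f0: "\<And>y. 0 \<le> f y" and fC: "\<And>y. f y \<le> C * norm y"
  shows "summable (\<lambda>j. f (mpow M j *v w))"
proof -
  obtain D \<rho> where D: "0 < \<rho>" "\<rho> < 1" "\<And>k. norm (mpow M k *v w) \<le> D * \<rho>^k"
    using schur_decay[OF assms(1)] by blast
  show ?thesis
  proof (rule summable_comparison_test)
    show "\<exists>N. \<forall>n\<ge>N. norm (f (mpow M n *v w)) \<le> \<bar>C\<bar> * D * \<rho>^n"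
    proof (intro exI allI impI)
      fix n
      have "f (mpow M n *v w) \<le> \<bar>C\<bar> * norm (mpow M n *v w)"
        using fC[of "mpow M n *v w"] by (smt (verit) mult_right_mono norm_ge_zero abs_ge_self)
      also have "\<dots> \<le> \<bar>C\<bar> * (D * \<rho>^n)" by (intro mult_left_mono D(3)) simp
      finally show "norm (f (mpow M n *v w)) \<le> \<bar>C\<bar> * D * \<rho>^n" using f0 by simp
    qed
    show "summable (\<lambda>n. \<bar>C\<bar> * D * \<rho>^n)"
      using D by (intro summable_mult summable_geometric) simp
  qed
qed


lemma mpow_Suc_mv: "mpow (A + B ** K) (Suc j) *v w = A *v (mpow (A + B ** K) j *v w) + B *v (K *v (mpow (A + B ** K) j *v w))"
  by (simp add: matrix_vector_mul_assoc[symmetric] matrix_vector_mult_add_rdistrib)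

lemma shift_feas:
  assumes f: "feas_sol A B K X U W r k xk Zf bnd N v z" and N: "1 < N" and w: "w \<in> W"
    and x': "x' = A *v xk + B *v v 0 + w"
  shows "feas_sol A B K X U W r (Suc k) x' (msum Zf ((\<lambda>w. mpow (A + B ** K) (N - 1) *v w) ` W))
     (Some (N - 1)) (N - 1)
     (\<lambda>j. v (Suc j) + K *v (mpow (A + B ** K) j *v w)) (\<lambda>j. z (Suc j) + mpow (A + B ** K) j *v w)"
proof -
  let ?M = "A + B ** K"
  let ?P = "\<lambda>j. mpow ?M j *v w"
  have f0: "z 0 = xk" and fd: "\<And>j. j < N \<Longrightarrow> z (Suc j) = A *v z j + B *v v j"
    and fx: "\<And>j. 1 \<le> j \<Longrightarrow> j < N \<Longrightarrow> z j \<in> pdiff (X (k + j)) (Sset ?M W j)"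
    and fu: "\<And>j. j < N \<Longrightarrow> v j \<in> pdiff (U (k + j)) ((\<lambda>s. K *v s) ` Sset ?M W j)"
    and fN: "z N \<in> msum {r (k + N)} Zf"
    using f unfolding feas_sol_def by auto
  have c1: "z (Suc 0) + ?P 0 = x'" using fd[of 0] N f0 x' by simp
  have c2: "z (Suc (Suc j)) + ?P (Suc j) = A *v (z (Suc j) + ?P j) + B *v (v (Suc j) + K *v ?P j)"
    if "j < N - 1" for j
    using fd[of "Suc j"] that unfolding mpow_Suc_mv by (simp add: matrix_vector_right_distrib)
  have c3: "z (Suc j) + ?P j \<in> pdiff (X (Suc k + j)) (Sset ?M W j)" if "1 \<le> j" "j < N - 1" for j
  proof -
    have h: "z (Suc j) \<in> pdiff (X (k + Suc j)) (Sset ?M W (Suc j))" using fx[of "Suc j"] that by simp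
    show ?thesis unfolding pdiff_def msum_def
    proof clarsimp
      fix q assume q: "q \<in> Sset ?M W j"
      have "q + ?P j \<in> Sset ?M W (Suc j)" using q w by (auto simp: msum_def)
      hence "z (Suc j) + (q + ?P j) \<in> X (k + Suc j)" using h unfolding pdiff_def msum_def by blast
      thus "z (Suc j) + mpow ?M j *v w + q \<in> X (Suc (k + j))" by (simp add: algebra_simps)
    qed
  qed
  have c4: "v (Suc j) + K *v ?P j \<in> pdiff (U (Suc k + j)) ((\<lambda>s. K *v s) ` Sset ?M W j)" if "j < N - 1" for j
  proof -
    have h: "v (Suc j) \<in> pdiff (U (k + Suc j)) ((\<lambda>s. K *v s) ` Sset ?M W (Suc j))" using fu[of "Suc j"] that by simp
    show ?thesis unfolding pdiff_def msum_def
    proof clarsimp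
      fix q assume q: "q \<in> Sset ?M W j"
      have "q + ?P j \<in> Sset ?M W (Suc j)" using q w by (auto simp: msum_def)
      hence "v (Suc j) + K *v (q + ?P j) \<in> U (k + Suc j)" using h unfolding pdiff_def msum_def by blast
      thus "v (Suc j) + K *v (mpow ?M j *v w) + K *v q \<in> U (Suc (k + j))"
        by (simp add: algebra_simps matrix_vector_right_distrib)
    qed
  qed
  have c5: "z (Suc (N - 1)) + ?P (N - 1) \<in> msum {r (Suc k + (N - 1))} (msum Zf ((\<lambda>w. mpow ?M (N - 1) *v w) ` W))"
  proof -
    from fN obtain q where q: "q \<in> Zf" "z N = r (k + N) + q" unfolding msum_def by auto
    have "z (Suc (N - 1)) + ?P (N - 1) = r (Suc k + (N - 1)) + (q + ?P (N - 1))"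
      using q N by (simp add: algebra_simps)
    moreover have "q + ?P (N - 1) \<in> msum Zf ((\<lambda>w. mpow ?M (N - 1) *v w) ` W)"
      using q w unfolding msum_def by blast
    ultimately show ?thesis unfolding msum_def by blast
  qed
  show ?thesis unfolding feas_sol_def using N c1 c2 c3 c4 c5 by auto
qed

lemma run_opt:
  assumes "atcs_run A B K X U W r gz gv nz nv lam x0 x w Ns vs zs Zf k"
  shows "\<exists>bnd. opt_sol A B K X U W r gz gv nz nv k (x k) (Zf k) bnd (Ns k) (vs k) (zs k)"
proof (cases k)
  case 0 thus ?thesis using assms unfolding atcs_run_def by auto
next
  case (Suc j)
  hence "atcs_step A B K X U W r gz gv nz nv lam x Ns vs zs Zf k" using assms unfolding atcs_run_def by auto
  thus ?thesis unfolding atcs_step_def by (auto split: if_splits)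
qed

lemma opt_le:
  assumes "opt_sol A B K X U W r gz gv nz nv k x Zf bnd N v z"
    and "feas_sol A B K X U W r k x Zf bnd N' v' z'"
  shows "cost gz gv nz nv r k N v z \<le> cost gz gv nz nv r k N' v' z'"
proof -
  have "optval A B K X U W r gz gv nz nv k x Zf bnd \<le> ereal (cost gz gv nz nv r k N' v' z')"
    unfolding optval_def by (rule Inf_lower) (use assms(2) in blast)
  thus ?thesis using assms(1) unfolding opt_sol_def by (metis ereal_less_eq(3))
qed


lemma cost_shift:
  fixes M :: "real^'n^'n" and K :: "real^'n^'m"
  assumes gz: "gz \<ge> 0" and gv: "gv \<ge> 0" and nz: "is_norm nz" and nv: "is_norm nv" and N: "1 < N"
    and s1: "summable (\<lambda>j. nz (mpow M j *v w))" and s2: "summable (\<lambda>j. nv (K *v (mpow M j *v w)))"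
  shows "cost gz gv nz nv r (Suc k) (N - 1) (\<lambda>j. v (Suc j) + K *v (mpow M j *v w)) (\<lambda>j. z (Suc j) + mpow M j *v w)
     \<le> cost gz gv nz nv r k N v z - 1 + (gz * (\<Sum>j. nz (mpow M j *v w)) + gv * (\<Sum>j. nv (K *v (mpow M j *v w))))"
proof -
  obtain N' where N': "N = Suc N'" using N by (cases N) auto
  define a where "a j = nz (z j - r (k + j))" for j
  define b where "b j = nv (v j)" for j
  define p where "p j = nz (mpow M j *v w)" for j
  define q where "q j = nv (K *v (mpow M j *v w))" for j
  have nz0: "\<And>y. 0 \<le> nz y" and nv0: "\<And>y. 0 \<le> nv y" using nz nv unfolding is_norm_def by auto
  have nzt: "\<And>x y. nz (x + y) \<le> nz x + nz y" and nvt: "\<And>x y. nv (x + y) \<le> nv x + nv y"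
    using nz nv unfolding is_norm_def by auto
  have S1: "(\<Sum>j\<le>N'. nz (z (Suc j) + mpow M j *v w - r (Suc k + j))) \<le> (\<Sum>j\<le>N. a j) - a 0 + (\<Sum>j. p j)"
  proof -
    have "(\<Sum>j\<le>N'. nz (z (Suc j) + mpow M j *v w - r (Suc k + j))) \<le> (\<Sum>j\<le>N'. a (Suc j) + p j)"
    proof (intro sum_mono)
      fix j
      have "z (Suc j) + mpow M j *v w - r (Suc k + j) = (z (Suc j) - r (k + Suc j)) + mpow M j *v w" by simp
      thus "nz (z (Suc j) + mpow M j *v w - r (Suc k + j)) \<le> a (Suc j) + p j"
        unfolding a_def p_def using nzt by metis
    qed
    also have "\<dots> = (\<Sum>j\<le>N'. a (Suc j)) + (\<Sum>j\<le>N'. p j)" by (simp add: sum.distrib)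
    also have "(\<Sum>j\<le>N'. a (Suc j)) = (\<Sum>j\<le>N. a j) - a 0" unfolding N' sum.atMost_Suc_shift by simp
    also have "(\<Sum>j\<le>N'. p j) \<le> (\<Sum>j. p j)"
      by (rule sum_le_suminf) (use s1 nz0 in \<open>auto simp: p_def\<close>)
    finally show ?thesis by simp
  qed
  have S2: "(\<Sum>j<N'. nv (v (Suc j) + K *v (mpow M j *v w))) \<le> (\<Sum>j<N. b j) - b 0 + (\<Sum>j. q j)"
  proof -
    have "(\<Sum>j<N'. nv (v (Suc j) + K *v (mpow M j *v w))) \<le> (\<Sum>j<N'. b (Suc j) + q j)"
      by (intro sum_mono) (unfold b_def q_def, rule nvt)
    also have "\<dots> = (\<Sum>j<N'. b (Suc j)) + (\<Sum>j<N'. q j)" by (simp add: sum.distrib)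
    also have "(\<Sum>j<N'. b (Suc j)) = (\<Sum>j<N. b j) - b 0" unfolding N' sum.lessThan_Suc_shift by simp
    also have "(\<Sum>j<N'. q j) \<le> (\<Sum>j. q j)"
      by (rule sum_le_suminf) (use s2 nv0 in \<open>auto simp: q_def\<close>)
    finally show ?thesis by simp
  qed
  have a0: "a 0 \<ge> 0" "b 0 \<ge> 0" unfolding a_def b_def using nz0 nv0 by auto
  have "cost gz gv nz nv r (Suc k) (N - 1) (\<lambda>j. v (Suc j) + K *v (mpow M j *v w)) (\<lambda>j. z (Suc j) + mpow M j *v w)
     = real N' + gz * (\<Sum>j\<le>N'. nz (z (Suc j) + mpow M j *v w - r (Suc k + j)))
        + gv * (\<Sum>j<N'. nv (v (Suc j) + K *v (mpow M j *v w)))" unfolding cost_def N' by simp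
  also have "\<dots> \<le> real N' + gz * ((\<Sum>j\<le>N. a j) + (\<Sum>j. p j)) + gv * ((\<Sum>j<N. b j) + (\<Sum>j. q j))"
    using S1 S2 a0 gz gv by (intro add_mono mult_left_mono order_refl) auto
  also have "\<dots> = cost gz gv nz nv r k N v z - 1 + (gz * (\<Sum>j. p j) + gv * (\<Sum>j. q j))"
    unfolding cost_def a_def b_def N' by (simp add: algebra_simps)
  finally show ?thesis unfolding p_def q_def .
qed


theorem theorem1:
  fixes A :: "real^'n^'n" and B :: "real^'m^'n" and K :: "real^'n^'m"
    and X :: "nat \<Rightarrow> (real^'n) set" and U :: "nat \<Rightarrow> (real^'m) set" and W :: "(real^'n) set"
    and r :: "nat \<Rightarrow> real^'n" and gz gv lam :: real
    and nz :: "real^'n \<Rightarrow> real" and nv :: "real^'m \<Rightarrow> real" and x0 :: "real^'n"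
  assumes "\<And>k. convex (X k)" and "\<And>k. convex (U k)" and "convex W"
    and "is_schur (A + B ** K)"
    and "gz \<ge> 0" and "gv \<ge> 0" and "is_norm nz" and "is_norm nv"
    and "\<exists>N v z. feas_sol A B K X U W r 0 x0 {0} None N v z"
  shows
   "(\<forall>x w Ns vs zs Zf k.
       atcs_run A B K X U W r gz gv nz nv lam x0 x w Ns vs zs Zf k \<and> 1 < Ns k \<and>
       w k \<in> W \<and> x (Suc k) = A *v x k + B *v vs k 0 + w k \<longrightarrow>
       (if optval A B K X U W r gz gv nz nv (Suc k) (x (Suc k)) {0} None
             > ereal (cost gz gv nz nv r k (Ns k) (vs k) (zs k) - lam)
        then (\<exists>N v z. feas_sol A B K X U W r (Suc k) (x (Suc k))
                 (msum (Zf k) ((\<lambda>w. mpow (A + B ** K) (Ns k - 1) *v w) ` W)) (Some (Ns k - 1)) N v z)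
        else (\<exists>N v z. feas_sol A B K X U W r (Suc k) (x (Suc k)) {0} None N v z)))
    \<and>
    (lam > 0 \<and>
     ereal lam = 1 - (SUP w\<in>W. ereal (gz * (\<Sum>j. nz (mpow (A + B ** K) j *v w))
                                     + gv * (\<Sum>j. nv (K *v (mpow (A + B ** K) j *v w)))))
     \<longrightarrow> (\<forall>x w Ns vs zs Zf k.
            atcs_run A B K X U W r gz gv nz nv lam x0 x w Ns vs zs Zf (Suc k) \<longrightarrow>
            cost gz gv nz nv r (Suc k) (Ns (Suc k)) (vs (Suc k)) (zs (Suc k))
              \<le> cost gz gv nz nv r k (Ns k) (vs k) (zs k) - lam))"
proof (intro conjI impI allI)
  let ?M = "A + B ** K"
  fix x w Ns vs zs Zf k
  assume H: "atcs_run A B K X U W r gz gv nz nv lam x0 x w Ns vs zs Zf k \<and> 1 < Ns k \<and>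
       w k \<in> W \<and> x (Suc k) = A *v x k + B *v vs k 0 + w k"
  obtain bnd where ob: "opt_sol A B K X U W r gz gv nz nv k (x k) (Zf k) bnd (Ns k) (vs k) (zs k)"
    using run_opt[OF conjunct1[OF H]] by blast
  hence fk: "feas_sol A B K X U W r k (x k) (Zf k) bnd (Ns k) (vs k) (zs k)" unfolding opt_sol_def by blast
  show "if optval A B K X U W r gz gv nz nv (Suc k) (x (Suc k)) {0} None
             > ereal (cost gz gv nz nv r k (Ns k) (vs k) (zs k) - lam)
        then (\<exists>N v z. feas_sol A B K X U W r (Suc k) (x (Suc k))
                 (msum (Zf k) ((\<lambda>w. mpow (A + B ** K) (Ns k - 1) *v w) ` W)) (Some (Ns k - 1)) N v z)
        else (\<exists>N v z. feas_sol A B K X U W r (Suc k) (x (Suc k)) {0} None N v z)"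
  proof (cases "optval A B K X U W r gz gv nz nv (Suc k) (x (Suc k)) {0} None
             > ereal (cost gz gv nz nv r k (Ns k) (vs k) (zs k) - lam)")
    case True
    have "feas_sol A B K X U W r (Suc k) (x (Suc k))
       (msum (Zf k) ((\<lambda>w. mpow ?M (Ns k - 1) *v w) ` W)) (Some (Ns k - 1)) (Ns k - 1)
       (\<lambda>j. vs k (Suc j) + K *v (mpow ?M j *v w k)) (\<lambda>j. zs k (Suc j) + mpow ?M j *v w k)"
      using H by (intro shift_feas[OF fk]) auto
    thus ?thesis using True by (simp only: if_True) blast
  next
    case False
    have "\<exists>N v z. feas_sol A B K X U W r (Suc k) (x (Suc k)) {0} None N v z"
    proof (rule ccontr)
      assume "\<not> ?thesis"
      hence "optval A B K X U W r gz gv nz nv (Suc k) (x (Suc k)) {0} None = \<infinity>"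
        unfolding optval_def by (simp add: top_ereal_def[symmetric])
      thus False using False by simp
    qed
    thus ?thesis using False by simp
  qed
next
  let ?M = "A + B ** K"
  fix x w Ns vs zs Zf k
  assume L: "0 < lam \<and> ereal lam = 1 - (SUP w\<in>W. ereal (gz * (\<Sum>j. nz (mpow (A + B ** K) j *v w))
                                     + gv * (\<Sum>j. nv (K *v (mpow (A + B ** K) j *v w)))))"
  assume R: "atcs_run A B K X U W r gz gv nz nv lam x0 x w Ns vs zs Zf (Suc k)"
  have Rk: "atcs_run A B K X U W r gz gv nz nv lam x0 x w Ns vs zs Zf k"
    using R unfolding atcs_run_def by auto
  obtain bnd where ob: "opt_sol A B K X U W r gz gv nz nv k (x k) (Zf k) bnd (Ns k) (vs k) (zs k)"
    using run_opt[OF Rk] by blast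
  hence fk: "feas_sol A B K X U W r k (x k) (Zf k) bnd (Ns k) (vs k) (zs k)" unfolding opt_sol_def by blast
  have st: "atcs_step A B K X U W r gz gv nz nv lam x Ns vs zs Zf (Suc k)"
    using R unfolding atcs_run_def by auto
  have wk: "w k \<in> W" and xk: "x (Suc k) = A *v x k + B *v vs k 0 + w k"
    using R unfolding atcs_run_def by auto
  have N1: "1 < Ns k" using st unfolding atcs_step_def by simp
  show "cost gz gv nz nv r (Suc k) (Ns (Suc k)) (vs (Suc k)) (zs (Suc k))
              \<le> cost gz gv nz nv r k (Ns k) (vs k) (zs k) - lam"
  proof (cases "optval A B K X U W r gz gv nz nv (Suc k) (x (Suc k)) {0} None
           > ereal (cost gz gv nz nv r k (Ns k) (vs k) (zs k) - lam)")
    case False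
    hence os: "opt_sol A B K X U W r gz gv nz nv (Suc k) (x (Suc k)) {0} None (Ns (Suc k)) (vs (Suc k)) (zs (Suc k))"
      using st unfolding atcs_step_def by simp
    hence "ereal (cost gz gv nz nv r (Suc k) (Ns (Suc k)) (vs (Suc k)) (zs (Suc k)))
        \<le> ereal (cost gz gv nz nv r k (Ns k) (vs k) (zs k) - lam)"
      using False unfolding opt_sol_def by simp
    thus ?thesis by simp
  next
    case True
    hence Z: "Zf (Suc k) = msum (Zf k) ((\<lambda>w. mpow ?M (Ns k - 1) *v w) ` W)"
      and os: "opt_sol A B K X U W r gz gv nz nv (Suc k) (x (Suc k)) (Zf (Suc k)) (Some (Ns k - 1))
                 (Ns (Suc k)) (vs (Suc k)) (zs (Suc k))"
      using st unfolding atcs_step_def by auto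
    have fc: "feas_sol A B K X U W r (Suc k) (x (Suc k)) (Zf (Suc k)) (Some (Ns k - 1)) (Ns k - 1)
     (\<lambda>j. vs k (Suc j) + K *v (mpow ?M j *v w k)) (\<lambda>j. zs k (Suc j) + mpow ?M j *v w k)"
      unfolding Z by (rule shift_feas[OF fk N1 wk xk])
    have le1: "cost gz gv nz nv r (Suc k) (Ns (Suc k)) (vs (Suc k)) (zs (Suc k))
       \<le> cost gz gv nz nv r (Suc k) (Ns k - 1) (\<lambda>j. vs k (Suc j) + K *v (mpow ?M j *v w k)) (\<lambda>j. zs k (Suc j) + mpow ?M j *v w k)"
      by (rule opt_le[OF os fc])
    obtain Cz where Cz: "\<And>y. nz y \<le> Cz * norm y" using is_norm_bound[OF assms(7)] by blast
    obtain Cv where Cv: "Cv \<ge> 0" "\<And>y. nv y \<le> Cv * norm y" using is_norm_bound[OF assms(8)] by blast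
    obtain CK where CK: "\<And>y. norm (K *v y) \<le> norm y * CK"
      using bounded_linear.bounded[OF matrix_vector_mul_bounded_linear[of K]] by blast
    have nz0: "\<And>y. 0 \<le> nz y" and nv0: "\<And>y. 0 \<le> nv y" using assms(7,8) unfolding is_norm_def by auto
    have s1: "summable (\<lambda>j. nz (mpow ?M j *v w k))"
      by (rule schur_summable[OF assms(4) nz0 Cz])
    have "nv (K *v y) \<le> (Cv * CK) * norm y" for y
      using Cv(2)[of "K *v y"] CK[of y] Cv(1) by (smt (verit) mult.assoc mult.commute mult_left_mono)
    hence s2: "summable (\<lambda>j. nv (K *v (mpow ?M j *v w k)))"
      by (intro schur_summable[OF assms(4), where f = "\<lambda>y. nv (K *v y)"]) (auto simp: nv0)
    have le2: "cost gz gv nz nv r (Suc k) (Ns k - 1) (\<lambda>j. vs k (Suc j) + K *v (mpow ?M j *v w k)) (\<lambda>j. zs k (Suc j) + mpow ?M j *v w k)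
      \<le> cost gz gv nz nv r k (Ns k) (vs k) (zs k) - 1 + (gz * (\<Sum>j. nz (mpow ?M j *v w k)) + gv * (\<Sum>j. nv (K *v (mpow ?M j *v w k))))"
      by (rule cost_shift[OF assms(5,6,7,8) N1 s1 s2])
    define S where "S = (SUP w\<in>W. ereal (gz * (\<Sum>j. nz (mpow (A + B ** K) j *v w))
                                     + gv * (\<Sum>j. nv (K *v (mpow (A + B ** K) j *v w)))))"
    have Su: "ereal (gz * (\<Sum>j. nz (mpow ?M j *v w k)) + gv * (\<Sum>j. nv (K *v (mpow ?M j *v w k)))) \<le> S"
      unfolding S_def by (rule SUP_upper[OF wk])
    have "ereal lam = 1 - S" using L unfolding S_def by simp
    then have "S = ereal (1 - lam)" by (cases S) (auto simp: one_ereal_def)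
    with Su have "gz * (\<Sum>j. nz (mpow ?M j *v w k)) + gv * (\<Sum>j. nv (K *v (mpow ?M j *v w k))) \<le> 1 - lam" by simp
    thus ?thesis using le1 le2 by linarith
  qed
qed

end
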